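(* If $\nu>-1$, then the function $x\mapsto -\mathcal{J}_\nu'(x)$ is strictly log-concave on $(0,j_{\nu+1,1})$.
   Context: For $\nu>-1$ define $\mathcal{J}_\nu:\mathbb{R}\to(-\infty,1]$ by $\mathcal{J}_\nu(x)=\sum_{n\ge0}\frac{(-1/4)^n}{(\nu+1)_n\, n!}x^{2n}$, equivalently $\mathcal{J}_\nu(x)=2^\nu\Gamma(\nu+1)x^{-\nu}J_\nu(x)$ for $x>0$, where $J_\nu$ is the Bessel function of the first kind and $(a)_n$ is the Pochhammer symbol. $j_{\mu,1}$ denotes the first positive zero of $J_\mu$. Note that $-\mathcal{J}_\nu'(x)>0$ on $(0,j_{\nu+1,1})$. *)

theory Defs
  imports "HOL-Analysis.Analysis"
begin

definition calJ :: "real \<Rightarrow> real \<Rightarrow> real" where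
  "calJ nu x = (\<Sum>n. (-1/4)^n / (pochhammer (nu + 1) n * fact n) * x^(2*n))"

text \<open>Bessel function of the first kind (for x > 0).\<close>
definition BesselJ :: "real \<Rightarrow> real \<Rightarrow> real" where
  "BesselJ mu x = (\<Sum>n. (-1)^n / (fact n * Gamma (real n + mu + 1)) * (x/2) powr (2 * real n + mu))"

definition first_zero :: "real \<Rightarrow> real" where
  "first_zero mu = Inf {x. 0 < x \<and> BesselJ mu x = 0}"

definition strictly_concave_on :: "real set \<Rightarrow> (real \<Rightarrow> real) \<Rightarrow> bool" where
  "strictly_concave_on S f \<longleftrightarrow> convex S \<and>
     (\<forall>x\<in>S. \<forall>y\<in>S. x \<noteq> y \<longrightarrow> (\<forall>u. 0 < u \<and> u < 1 \<longrightarrow>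
        f (u * x + (1 - u) * y) > u * f x + (1 - u) * f y))"

definition strictly_log_concave_on :: "real set \<Rightarrow> (real \<Rightarrow> real) \<Rightarrow> bool" where
  "strictly_log_concave_on S f \<longleftrightarrow> (\<forall>x\<in>S. f x > 0) \<and> strictly_concave_on S (\<lambda>x. ln (f x))"

end

theory Submission
  imports Defs
begin

definition bc :: "real \<Rightarrow> nat \<Rightarrow> real" where
  "bc m n = (-1/4)^n / (pochhammer (m + 1) n * fact n)"

definition FF :: "real \<Rightarrow> real \<Rightarrow> real" where
  "FF m y = (\<Sum>n. bc m n * y^n)"

lemma calJ_FF: "calJ m x = FF m (x^2)"
  unfolding calJ_def FF_def bc_def by (simp add: power_mult)

lemma poch_pos: "m > -1 \<Longrightarrow> pochhammer (m+1) n > (0::real)"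
  by (rule pochhammer_pos) simp

lemma bc_Suc: "m > -1 \<Longrightarrow> bc m (Suc n) = bc m n * (-1/4) / ((m + 1 + real n) * (real n + 1))"
  unfolding bc_def using poch_pos[of m n]
  by (simp add: pochhammer_rec' field_simps)

lemma summable_bc:
  assumes "m > -1" shows "summable (\<lambda>n. bc m n * y^n)"
proof (rule summable_ratio_test[where c="1/2" and N="nat \<lceil>\<bar>y\<bar>\<rceil>"])
  fix n assume n: "n \<ge> nat \<lceil>\<bar>y\<bar>\<rceil>"
  hence ny: "\<bar>y\<bar> \<le> real n" by linarith
  have p1: "m + 1 + real n > 0" using assms by simp
  have "norm (bc m (Suc n) * y ^ Suc n) = norm (bc m n * y^n) * (\<bar>y\<bar> / (4 * (m + 1 + real n) * (real n + 1)))"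
  proof -
    have d: "\<bar>(m + 1 + real n) * (real n + 1)\<bar> = (m + 1 + real n) * (real n + 1)"
      using p1 by simp
    show ?thesis using p1 d by (simp add: bc_Suc[OF assms] abs_mult abs_divide field_simps)
  qed
  also have "\<dots> \<le> norm (bc m n * y^n) * (1/2)"
  proof (rule mult_left_mono)
    have "\<bar>y\<bar> \<le> 4 * (m + 1 + real n) * (real n + 1) / 2"
    proof -
      have "real n \<le> (m + 1 + real n) * (real n + 1)"
      proof -
        have "(m+1)*(real n+1) \<ge> 0" using assms by simp
        moreover have "real n*(real n+1) \<ge> real n" by (simp add: algebra_simps)
        moreover have "(m+1+real n)*(real n+1) = (m+1)*(real n+1) + real n*(real n+1)" by (simp add: algebra_simps)
        ultimately show ?thesis by linarith
      qed
      thus ?thesis using ny by linarith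
    qed
    thus "\<bar>y\<bar> / (4 * (m + 1 + real n) * (real n + 1)) \<le> 1/2"
      using p1 by (simp add: divide_simps)
  qed simp
  finally show "norm (bc m (Suc n) * y ^ Suc n) \<le> 1/2 * norm (bc m n * y^n)" by simp
qed simp

lemma cancel_k: "(k::real) \<noteq> 0 \<Longrightarrow> k * (A / (B * (k * C))) = A / (B * C)"
  by (cases "B = 0"; cases "C = 0") (auto simp: field_simps)

lemma diffs_bc: "diffs (bc m) n = -(1/(4*(m+1))) * bc (m+1) n" if "m > -1"
proof -
  have a: "m + 1 > 0" "real n + 1 > 0" using that by auto
  have P: "pochhammer (m+2) n > 0" using poch_pos[of "m+1" n] that by (simp add: add.assoc)
  have F: "(fact n :: real) > 0" by simp
  have e: "pochhammer (m+1) (Suc n) = (m+1) * pochhammer (m+2) n"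
    by (simp add: pochhammer_rec add.assoc)
  have "diffs (bc m) n = real (Suc n) * ((-1/4) * (-1/4)^n / ((m+1) * pochhammer (m+2) n * (real (Suc n) * fact n)))"
    unfolding diffs_def bc_def e by (simp add: mult.assoc)
  also have "\<dots> = (-1/4) * (-1/4)^n / ((m+1) * pochhammer (m+2) n * fact n)"
    using a by (intro cancel_k) simp
  also have "\<dots> = -(1/(4*(m+1))) * bc (m+1) n"
    unfolding bc_def using a P F by (simp add: field_simps add.assoc)
  finally show ?thesis .
qed

lemma FF_deriv: assumes "m > -1"
  shows "(FF m has_real_derivative (-(1/(4*(m+1))) * FF (m+1) y)) (at y)"
proof -
  have "(FF m has_real_derivative (\<Sum>n. diffs (bc m) n * y^n)) (at y)"
    unfolding FF_def by (rule termdiffs_strong_converges_everywhere) (rule summable_bc[OF assms])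
  also have "(\<Sum>n. diffs (bc m) n * y^n) = (\<Sum>n. (-(1/(4*(m+1)))) * (bc (m+1) n * y^n))"
    by (simp add: diffs_bc[OF assms] mult.assoc)
  also have "\<dots> = (-(1/(4*(m+1)))) * FF (m+1) y"
    unfolding FF_def by (rule suminf_mult) (rule summable_bc, use assms in simp)
  finally show ?thesis .
qed

lemma FF_0: "FF m 0 = 1"
  unfolding FF_def using powser_zero[of "bc m"] by (simp add: bc_def)

lemma bc_rec_aux:
  fixes u k P F X w :: real
  assumes "u > 0" "k > 0" "P > 0" "F > 0" "w = u + k"
  shows "(-1/4)*X/(u*P*(k*F)) - (-1/4)*X/(w*P*(k*F)) = -(1/(4*u*(u+1))) * (X/(w*P/(u+1)*F))"
proof -
  have n: "w \<noteq> 0" "u + 1 \<noteq> 0" "1 + u \<noteq> 0" "u \<noteq> 0" "k \<noteq> 0" "P \<noteq> 0" "F \<noteq> 0" using assms by auto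
  define c where "c = (-1/4)*X/(P*k*F)"
  have e1: "(-1/4)*X/(u*P*(k*F)) = c / u" unfolding c_def using n by (simp add: field_simps)
  have e2: "(-1/4)*X/(w*P*(k*F)) = c / w" unfolding c_def using n by (simp add: field_simps)
  have "(-1/4)*X/(u*P*(k*F)) - (-1/4)*X/(w*P*(k*F)) = c * (1/u - 1/w)"
    unfolding e1 e2 by (simp add: right_diff_distrib)
  also have "1/u - 1/w = k/(u*w)" using n assms(5) by (simp add: field_simps)
  also have "c * (k/(u*w)) = -X/(4*u*w*P*F)" unfolding c_def using n by (simp add: field_simps)
  also have "\<dots> = -(1/(4*u*(u+1))) * (X/(w*P/(u+1)*F))"
  proof -
    have "\<And>t. t \<noteq> 0 \<Longrightarrow> -(1/(4*u*t)) * (X/(w*P/t*F)) = -X/(4*u*w*P*F)"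
      using n by (simp add: field_simps)
    thus ?thesis using n(2) by metis
  qed
  finally show ?thesis .
qed

lemma bc_rec: assumes "m > -1"
  shows "bc m (Suc n) - bc (m+1) (Suc n) = -(1/(4*(m+1)*(m+2))) * bc (m+2) n"
proof -
  define P2 where "P2 = pochhammer (m+2) n"
  define X where "X = ((-1/4::real)^n)"
  define F where "F = (fact n :: real)"
  have P2: "P2 > 0" using poch_pos[of "m+1" n] assms by (simp add: P2_def add.assoc)
  have F: "F > 0" by (simp add: F_def)
  have e1: "pochhammer (m+1) (Suc n) = (m+1) * P2" by (simp add: pochhammer_rec add.assoc P2_def)
  have e2: "pochhammer (m+1+1) (Suc n) = (m+2+n) * P2" by (simp add: pochhammer_rec' P2_def algebra_simps)
  have e3: "pochhammer (m+2+1) n = (m+2+n) * P2 / (m+2)"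
  proof -
    have "pochhammer (m+2) (Suc n) = (m+2) * pochhammer (m+2+1) n" by (simp add: pochhammer_rec)
    moreover have "pochhammer (m+2) (Suc n) = (m+2+n) * P2" by (simp add: pochhammer_rec' P2_def algebra_simps)
    ultimately show ?thesis using assms by (simp add: field_simps)
  qed
  have a: "m+1 > 0" "m + 2 > 0" "m+2+n > 0" using assms by auto
  have "bc m (Suc n) - bc (m+1) (Suc n) = (-1/4) * X / ((m+1) * P2 * ((n+1) * F)) - (-1/4) * X / ((m+2+n) * P2 * ((n+1)*F))"
    unfolding bc_def e1 e2 by (simp add: X_def F_def)
  also have "\<dots> = -(1/(4*(m+1)*(m+2))) * (X / ((m+2+n) * P2 / (m+2) * F))"
    using bc_rec_aux[of "m+1" "real n+1" P2 F "m+2+n" X] a P2 F by (simp add: algebra_simps)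
  also have "\<dots> = -(1/(4*(m+1)*(m+2))) * bc (m+2) n"
    unfolding bc_def e3 by (simp add: X_def F_def add.assoc)
  finally show ?thesis .
qed

lemma FF_rec: assumes "m > -1"
  shows "FF m y - FF (m+1) y + y/(4*(m+1)*(m+2)) * FF (m+2) y = 0"
proof -
  define g where "g n = (bc m n - bc (m+1) n) * y^n" for n
  have s1: "g sums (FF m y - FF (m+1) y)"
    unfolding g_def FF_def left_diff_distrib
    by (intro sums_diff summable_sums summable_bc) (use assms in auto)
  have "(\<lambda>n. g (Suc n)) = (\<lambda>n. (-(y/(4*(m+1)*(m+2)))) * (bc (m+2) n * y^n))"
    unfolding g_def bc_rec[OF assms] by (rule ext) (simp add: algebra_simps)
  moreover have "(\<lambda>n. (-(y/(4*(m+1)*(m+2)))) * (bc (m+2) n * y^n)) sums ((-(y/(4*(m+1)*(m+2)))) * FF (m+2) y)"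
    unfolding FF_def by (intro sums_mult summable_sums summable_bc) (use assms in auto)
  ultimately have "g sums ((-(y/(4*(m+1)*(m+2)))) * FF (m+2) y + g 0)"
    using sums_Suc_iff by metis
  moreover have "g 0 = 0" by (simp add: g_def bc_def)
  ultimately have "FF m y - FF (m+1) y = (-(y/(4*(m+1)*(m+2)))) * FF (m+2) y"
    using s1 sums_unique2 by fastforce
  thus ?thesis by simp
qed

lemma calJ_deriv: assumes "m > -1"
  shows "(calJ m has_real_derivative (-x/(2*(m+1)) * calJ (m+1) x)) (at x)"
proof -
  have d: "((\<lambda>x. x^2) has_real_derivative 2*x) (at x)"
    by (auto intro!: derivative_eq_intros)
  have "((\<lambda>x. FF m (x^2)) has_real_derivative (-(1/(4*(m+1))) * FF (m+1) (x^2)) * (2*x)) (at x)"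
    by (rule DERIV_chain2[OF FF_deriv[OF assms] d])
  moreover have "(\<lambda>x. FF m (x^2)) = calJ m" by (rule ext) (simp add: calJ_FF)
  moreover have "(-(1/(4*(m+1))) * FF (m+1) (x^2)) * (2*x) = -x/(2*(m+1)) * calJ (m+1) x"
    using assms by (simp add: calJ_FF field_simps)
  ultimately show ?thesis by simp
qed

lemma calJ_rec: assumes "m > -1"
  shows "calJ m x - calJ (m+1) x + x^2/(4*(m+1)*(m+2)) * calJ (m+2) x = 0"
  unfolding calJ_FF using FF_rec[OF assms] .

lemma calJ_0: "calJ m 0 = 1"
  unfolding calJ_FF by (simp add: FF_0)

lemma BesselJ_calJ: assumes "m > -1" "x > 0"
  shows "BesselJ m x = (x/2) powr m / Gamma (m+1) * calJ m x"
proof -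
  have nz: "m + 1 \<notin> \<int>\<^sub>\<le>\<^sub>0" using assms(1) by (auto dest: nonpos_Ints_nonpos)
  have G: "Gamma (m+1) > 0" using assms by simp
  have tm: "(-1)^n / (fact n * Gamma (real n + m + 1)) * (x/2) powr (2 * real n + m)
     = (x/2) powr m / Gamma (m+1) * ((-1/4)^n / (pochhammer (m + 1) n * fact n) * x^(2*n))" for n
  proof -
    have g: "Gamma (real n + m + 1) = pochhammer (m+1) n * Gamma (m+1)"
      using pochhammer_Gamma[OF nz, of n] G by (simp add: field_simps add_ac)
    have p: "(x/2) powr (2 * real n + m) = (x/2)^(2*n) * (x/2) powr m"
      using assms(2) by (simp add: powr_add powr_realpow[symmetric])
    have q: "(-1::real)^n * (x/2)^(2*n) = (-1/4)^n * x^(2*n)"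
    proof -
      have "(-1::real)^n * (x/2)^(2*n) = ((-1) * (x/2)^2)^n" by (simp only: power_mult power_mult_distrib)
      also have "(-1) * (x/2)^2 = (-1/4) * x^2" by (simp add: power2_eq_square)
      also have "((-1/4) * x^2)^n = (-1/4)^n * x^(2*n)" by (simp only: power_mult power_mult_distrib)
      finally show ?thesis .
    qed
    have P: "pochhammer (m+1) n > 0" using poch_pos[OF assms(1)] .
    show ?thesis unfolding g p using G P q[symmetric]
      by (simp add: field_simps) (metis)
  qed
  show ?thesis unfolding BesselJ_def calJ_def tm
    by (rule suminf_mult) (use summable_bc[OF assms(1), of "x^2"] in \<open>simp add: bc_def power_mult\<close>)
qed

lemma strict_concave_aux:
  fixes f f' :: "real \<Rightarrow> real" and x y u :: real
  assumes xy: "x < y" and u: "0 < u" "u < 1"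
    and der: "\<And>t. x \<le> t \<Longrightarrow> t \<le> y \<Longrightarrow> (f has_real_derivative f' t) (at t)"
    and dec: "\<And>s t. x \<le> s \<Longrightarrow> s < t \<Longrightarrow> t \<le> y \<Longrightarrow> f' t < f' s"
  shows "f (u * x + (1 - u) * y) > u * f x + (1 - u) * f y"
proof -
  define z where "z = u * x + (1 - u) * y"
  have zx: "z - x = (1 - u) * (y - x)" and yz: "y - z = u * (y - x)"
    by (simp_all add: z_def algebra_simps)
  have "(1 - u) * (y - x) > 0" using xy u by simp
  hence xz: "x < z" using zx by linarith
  have "u * (y - x) > 0" using xy u by simp
  hence zy: "z < y" using yz by linarith
  obtain s where s: "x < s" "s < z" "f z - f x = (z - x) * f' s"
    using MVT2[OF xz, of f f'] der zy by force
  obtain t where t: "z < t" "t < y" "f y - f z = (y - z) * f' t"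
    using MVT2[OF zy, of f f'] der xz by force
  have lt: "f' t < f' s" using dec[of s t] s t by simp
  have p: "u * (1 - u) * (y - x) > 0" using u xy by simp
  have "u * (f z - f x) - (1 - u) * (f y - f z) = u * (1 - u) * (y - x) * (f' s - f' t)"
    unfolding s(3) t(3) zx yz by (simp add: algebra_simps)
  also have "\<dots> > 0" using p lt by simp
  finally have "u * (f z - f x) - (1 - u) * (f y - f z) > 0" .
  thus ?thesis unfolding z_def[symmetric] by (simp add: algebra_simps)
qed

lemma strictly_concave_from_deriv:
  fixes f f' :: "real \<Rightarrow> real"
  assumes der: "\<And>t. a < t \<Longrightarrow> t < b \<Longrightarrow> (f has_real_derivative f' t) (at t)"
    and dec: "\<And>s t. a < s \<Longrightarrow> s < t \<Longrightarrow> t < b \<Longrightarrow> f' t < f' s"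
  shows "strictly_concave_on {a<..<b} f"
  unfolding strictly_concave_on_def
proof (intro conjI ballI impI allI)
  show "convex {a<..<b}" by simp
  fix x y u :: real assume x: "x \<in> {a<..<b}" and y: "y \<in> {a<..<b}" and "x \<noteq> y" and u: "0 < u \<and> u < 1"
  show "f (u * x + (1 - u) * y) > u * f x + (1 - u) * f y"
  proof (cases "x < y")
    case True
    show ?thesis
      by (rule strict_concave_aux[OF True, of u f f']) (use x y u der dec in auto)
  next
    case False
    hence yx: "y < x" using \<open>x \<noteq> y\<close> by simp
    have "f ((1 - u) * y + (1 - (1 - u)) * x) > (1 - u) * f y + (1 - (1 - u)) * f x"
      by (rule strict_concave_aux[OF yx, of "1-u" f f']) (use x y u der dec in auto)
    thus ?thesis by (simp add: algebra_simps)
  qed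
qed

lemma eventually_near:
  fixes \<phi> :: "real \<Rightarrow> real"
  assumes "isCont \<phi> s" "\<phi> s > 0"
  shows "\<exists>d>0. \<forall>t. \<bar>t - s\<bar> < d \<longrightarrow> \<phi> t > 0"
proof -
  have "(\<phi> \<longlongrightarrow> \<phi> s) (at s)" using assms(1) by (simp add: isCont_def)
  hence "eventually (\<lambda>t. 0 < \<phi> t) (at s)" using order_tendstoD(1) assms(2) by blast
  then obtain d where d: "d > 0" "\<forall>t. t \<noteq> s \<and> dist t s < d \<longrightarrow> 0 < \<phi> t"
    unfolding eventually_at by blast
  show ?thesis using d assms(2) by (intro exI[of _ d]) (auto simp: dist_real_def)
qed

lemma pos_first_zero:
  fixes \<phi> \<phi>' :: "real \<Rightarrow> real"
  assumes der: "\<And>x. 0 \<le> x \<Longrightarrow> x < b \<Longrightarrow> (\<phi> has_real_derivative \<phi>' x) (at x)"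
    and z0: "\<phi> 0 \<ge> 0"
    and zd: "\<And>x. 0 \<le> x \<Longrightarrow> x < b \<Longrightarrow> \<phi> x = 0 \<Longrightarrow> \<phi>' x > 0"
    and y: "0 < y" "y < b"
  shows "\<phi> y > 0"
proof (rule ccontr)
  assume ny: "\<not> \<phi> y > 0"
  define S where "S = {x. 0 < x \<and> x \<le> y \<and> \<phi> x \<le> 0}"
  define s where "s = Inf S"
  have yS: "y \<in> S" using ny y by (simp add: S_def)
  have bdd: "bdd_below S" unfolding S_def by (rule bdd_belowI[of _ 0]) auto
  have sy: "s \<le> y" unfolding s_def by (rule cInf_lower[OF yS bdd])
  have sl: "s \<le> x" if "x \<in> S" for x unfolding s_def by (rule cInf_lower[OF that bdd])
  have low: "\<phi> t > 0" if "0 < t" "t < s" for t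
  proof (rule ccontr)
    assume "\<not> \<phi> t > 0"
    hence "t \<in> S" using that sy by (simp add: S_def)
    thus False using sl that by force
  qed
  have cont: "isCont \<phi> x" if "0 \<le> x" "x < b" for x using der[OF that] by (rule DERIV_isCont)
  obtain d where d: "d > 0" "\<And>t. 0 < t \<Longrightarrow> t < d \<Longrightarrow> \<phi> t > 0"
  proof (cases "\<phi> 0 > 0")
    case True
    obtain d where "d > 0" "\<forall>t. \<bar>t - 0\<bar> < d \<longrightarrow> \<phi> t > 0"
      using eventually_near[OF cont True] y by force
    thus ?thesis using that by auto
  next
    case False
    hence e: "\<phi> 0 = 0" using z0 by simp
    have "\<phi>' 0 > 0" using zd[of 0] e y by simp
    then obtain d where "d > 0" "\<forall>h>0. h < d \<longrightarrow> \<phi> 0 < \<phi> (0 + h)"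
      using DERIV_pos_inc_right[OF der[of 0]] y by force
    thus ?thesis using that e by auto
  qed
  have sd: "s \<ge> d" unfolding s_def
  proof (rule cInf_greatest)
    show "S \<noteq> {}" using yS by blast
    fix x assume "x \<in> S"
    thus "d \<le> x" using d(2)[of x] unfolding S_def by force
  qed
  have sb: "0 \<le> s" "s < b" using sd d sy y by auto
  have le: "\<phi> s \<le> 0"
  proof (rule ccontr)
    assume "\<not> \<phi> s \<le> 0"
    hence "\<phi> s > 0" by simp
    then obtain d2 where d2: "d2 > 0" "\<forall>t. \<bar>t - s\<bar> < d2 \<longrightarrow> \<phi> t > 0"
      using eventually_near[OF cont[OF sb]] by blast
    have "s + d2 \<le> s" unfolding s_def
    proof (rule cInf_greatest)
      show "S \<noteq> {}" using yS by blast
      fix x assume xS: "x \<in> S"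
      have "s \<le> x" using sl xS .
      moreover have "\<phi> x \<le> 0" using xS by (simp add: S_def)
      ultimately show "Inf S + d2 \<le> x" using d2 unfolding s_def
        by (smt (verit))
    qed
    thus False using d2 by simp
  qed
  have ge: "\<phi> s \<ge> 0"
  proof (rule ccontr)
    assume "\<not> \<phi> s \<ge> 0"
    hence "(\<lambda>t. - \<phi> t) s > 0" by simp
    moreover have "isCont (\<lambda>t. - \<phi> t) s" using cont[OF sb] by simp
    ultimately obtain d3 where d3: "d3 > 0" "\<forall>t. \<bar>t - s\<bar> < d3 \<longrightarrow> - \<phi> t > 0"
      using eventually_near by blast
    define t where "t = s - min d3 s / 2"
    have t: "0 < t" "t < s" "\<bar>t - s\<bar> < d3" using d3 sd d by (auto simp: t_def)
    have "- \<phi> t > 0" using d3(2) t(3) by blast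
    moreover have "\<phi> t > 0" using low t by blast
    ultimately show False by linarith
  qed
  have "\<phi>' s > 0" using zd[OF sb] le ge by simp
  then obtain d4 where d4: "d4 > 0" "\<forall>h>0. h < d4 \<longrightarrow> \<phi> (s - h) < \<phi> s"
    using DERIV_pos_inc_left[OF der[OF sb]] by force
  define h where "h = min d4 s / 2"
  have "h > 0" "h < d4" "s - h > 0" "s - h < s" using d4 sd d by (auto simp: h_def)
  thus False using d4 low[of "s - h"] le ge by force
qed

lemma alg_poly:
  fixes A B C x j0 j1 j2 j3 :: real
  assumes B: "B = A + 2" and C: "C = A + 4"
    and r0: "A*B*j0 - A*B*j1 + x^2*j2 = 0"
    and r1: "B*C*j1 - B*C*j2 + x^2*j3 = 0"
    and q: "A*B*j1*j0 - A*x^2*j2*j0 + B*x^2*j1^2 = 0"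
  shows "x * (-3*A*C*x*j0*j2 + A*x^3*j0*j3 - C*x*j1*(B*j1 - x^2*j2) + C*(2*B*x*j1^2 - 2*x^3*j1*j2)) = A*B*C*(A-1)*j0*j1"
  using assms by algebra

lemma alg_D:
  fixes A B C x j0 j1 j2 j3 :: real
  assumes A: "A > 0" and B: "B = A + 2" and C: "C = A + 4"
    and r0: "j0 - j1 + x^2/(A*B)*j2 = 0"
    and r1: "j1 - j2 + x^2/(B*C)*j3 = 0"
    and q: "(j1 - x^2*j2/B)*j0 + x^2*j1^2/A = 0"
  shows "x * ((-x/B*j2 - (2*x*j2 + x^2*(-x/C*j3))/B)*j0 + (j1 - x^2*j2/B)*(-x/A*j1) + (2*x*j1^2 + x^2*(2*j1*(-x/B*j2)))/A)
     = (A-1)*j0*j1"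
proof -
  have nz: "A \<noteq> 0" "B \<noteq> 0" "C \<noteq> 0" using A B C by auto
  have r0': "A*B*j0 - A*B*j1 + x^2*j2 = 0"
  proof -
    have "A*B*(j0 - j1 + x^2/(A*B)*j2) = 0" using r0 by simp
    thus ?thesis using nz by (simp add: algebra_simps)
  qed
  have r1': "B*C*j1 - B*C*j2 + x^2*j3 = 0"
  proof -
    have "B*C*(j1 - j2 + x^2/(B*C)*j3) = 0" using r1 by simp
    thus ?thesis using nz by (simp add: algebra_simps)
  qed
  have q': "A*B*j1*j0 - A*x^2*j2*j0 + B*x^2*j1^2 = 0"
  proof -
    have "A*B*((j1 - x^2*j2/B)*j0 + x^2*j1^2/A) = 0" using q by simp
    thus ?thesis using nz by (simp add: algebra_simps)
  qed
  define E where "E = (-x/B*j2 - (2*x*j2 + x^2*(-x/C*j3))/B)*j0 + (j1 - x^2*j2/B)*(-x/A*j1) + (2*x*j1^2 + x^2*(2*j1*(-x/B*j2)))/A"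
  have e: "A*B*C*E = -3*A*C*x*j0*j2 + A*x^3*j0*j3 - C*x*j1*(B*j1 - x^2*j2) + C*(2*B*x*j1^2 - 2*x^3*j1*j2)"
    unfolding E_def using nz by (simp add: field_simps power2_eq_square power3_eq_cube)
  have "A*B*C*(x*E) = x*(A*B*C*E)" by (simp add: mult_ac)
  also have "\<dots> = A*B*C*((A-1)*j0*j1)" unfolding e using alg_poly[OF B C r0' r1' q'] by simp
  finally have "A*B*C*(x*E) = A*B*C*((A-1)*j0*j1)" .
  thus ?thesis using nz unfolding E_def by simp
qed

lemma dQ_gen:
  fixes J0 J1 J2 J3 :: "real \<Rightarrow> real" and A B C :: real
  assumes d0: "\<And>x s. (J0 has_real_derivative (-x/A * J1 x)) (at x within s)"
    and d1: "\<And>x s. (J1 has_real_derivative (-x/B * J2 x)) (at x within s)"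
    and d2: "\<And>x s. (J2 has_real_derivative (-x/C * J3 x)) (at x within s)"
    and nz: "A \<noteq> 0" "B \<noteq> 0" "C \<noteq> 0"
  shows "((\<lambda>x. (J1 x - x^2*J2 x*(1/B))*J0 x + x^2*(J1 x)^2*(1/A)) has_real_derivative
     ((-x/B*J2 x - (2*x*J2 x + x^2*(-x/C*J3 x))/B)*J0 x + (J1 x - x^2*J2 x/B)*(-x/A*J1 x) + (2*x*(J1 x)^2 + x^2*(2*J1 x*(-x/B*J2 x)))/A)) (at x)"
  apply (rule DERIV_cong)
   apply (rule derivative_eq_intros d0 d1 d2 refl)+
  using nz apply (simp add: field_simps power2_eq_square)
  done

lemma dg_gen:
  fixes J0 J1 J2 :: "real \<Rightarrow> real" and A B :: real
  assumes d0: "\<And>x s. (J0 has_real_derivative (-x/A * J1 x)) (at x within s)"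
    and d1: "\<And>x s. (J1 has_real_derivative (-x/B * J2 x)) (at x within s)"
    and nz: "A \<noteq> 0" "B \<noteq> 0" and j0: "A * J0 x \<noteq> 0"
  shows "((\<lambda>x. x * J1 x / (A * J0 x)) has_real_derivative
     ((J1 x - x^2*J2 x/B)*J0 x + x^2*(J1 x)^2/A) / (A * (J0 x)^2)) (at x)"
  apply (rule DERIV_cong)
   apply (rule derivative_eq_intros d0 d1 j0 refl)+
  using nz j0 apply (simp add: field_simps power2_eq_square)
  done

lemma dphi_gen:
  fixes J0 J1 :: "real \<Rightarrow> real" and A m :: real
  assumes d0: "\<And>x s. (J0 has_real_derivative (-x/A * J1 x)) (at x within s)"
    and nz: "A \<noteq> 0" "m \<noteq> 0" and x: "x \<noteq> 0" and p: "0 < x/m * J0 x" 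
  shows "((\<lambda>x. ln (x/m * J0 x)) has_real_derivative (1/x - x * J1 x / (A * J0 x))) (at x)"
proof -
  have j: "J0 x \<noteq> 0" using p by auto
  show ?thesis
  apply (rule DERIV_cong)
   apply (rule derivative_eq_intros d0 p nz refl)+
  using nz j x apply (simp add: field_simps power2_eq_square)
  done
qed
theorem theorem2:
  fixes nu :: real
  assumes "nu > -1"
  shows "strictly_log_concave_on {0<..<first_zero (nu + 1)} (\<lambda>x. - deriv (calJ nu) x)"
proof -
  define mu where "mu = nu + 1"
  have mu: "mu > 0" using assms by (simp add: mu_def)
  define b where "b = first_zero (nu + 1)"
  define A where "A = 2*(mu+1)"
  define B where "B = 2*(mu+2)"
  define C where "C = 2*(mu+3)"
  have ABC: "A > 1" "B = A + 2" "C = A + 4" using mu by (auto simp: A_def B_def C_def)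
  define J0 where "J0 = calJ mu"
  define J1 where "J1 = calJ (mu+1)"
  define J2 where "J2 = calJ (mu+2)"
  define J3 where "J3 = calJ (mu+3)"
  have d0: "(J0 has_real_derivative (-x/A * J1 x)) (at x within s)" for x s
    using calJ_deriv[of mu x] mu unfolding J0_def J1_def A_def
    by (auto intro: has_field_derivative_at_within)
  have d1: "(J1 has_real_derivative (-x/B * J2 x)) (at x within s)" for x s
    using calJ_deriv[of "mu+1" x] mu unfolding J1_def J2_def B_def
    by (auto intro: has_field_derivative_at_within simp: add.assoc)
  have d2: "(J2 has_real_derivative (-x/C * J3 x)) (at x within s)" for x s
    using calJ_deriv[of "mu+2" x] mu unfolding J2_def J3_def C_def
    by (auto intro: has_field_derivative_at_within simp: add.assoc)
  have r0: "J0 x - J1 x + x^2/(A*B) * J2 x = 0" for x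
    using calJ_rec[of mu x] mu unfolding J0_def J1_def J2_def A_def B_def
    by (simp add: algebra_simps)
  have r1: "J1 x - J2 x + x^2/(B*C) * J3 x = 0" for x
    using calJ_rec[of "mu+1" x] mu unfolding J1_def J2_def J3_def C_def B_def
    by (simp add: algebra_simps)
  have v: "J0 0 = 1" "J1 0 = 1" "J2 0 = 1" by (simp_all add: J0_def J1_def J2_def calJ_0)
  have hfun: "(\<lambda>x. - deriv (calJ nu) x) = (\<lambda>x. x/(2*mu) * J0 x)"
  proof
    fix x
    have "deriv (calJ nu) x = -x/(2*(nu+1)) * calJ (nu+1) x"
      by (rule DERIV_imp_deriv[OF calJ_deriv[OF assms]])
    thus "- deriv (calJ nu) x = x/(2*mu) * J0 x" by (simp add: mu_def J0_def)
  qed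
  have pos0: "J0 x > 0" if x: "0 < x" "x < b" for x
  proof (rule ccontr)
    assume "\<not> J0 x > 0"
    hence "J0 x \<le> 0" by simp
    moreover have "continuous_on {0..x} J0"
      by (rule continuous_at_imp_continuous_on) (auto intro: DERIV_isCont[OF d0])
    ultimately obtain z where z: "0 \<le> z" "z \<le> x" "J0 z = 0"
      using IVT2'[of J0 x 0 0] x v by auto
    have z0: "z > 0" using z v by (cases "z = 0") auto
    have "BesselJ (nu+1) z = 0"
      using BesselJ_calJ[of "nu+1" z] z z0 assms unfolding J0_def mu_def by simp
    hence zS: "z \<in> {x. 0 < x \<and> BesselJ (nu+1) x = 0}" using z0 by simp
    have "b \<le> z" unfolding b_def first_zero_def
      by (rule cInf_lower[OF zS]) (rule bdd_belowI[of _ 0], auto)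
    thus False using z x by simp
  qed
  have pos1: "J1 x > 0" if x: "0 < x" "x < b" for x
  proof (rule pos_first_zero[of b J1 "\<lambda>x. -x/B * J2 x"])
    show "(J1 has_real_derivative -t/B * J2 t) (at t)" for t by (rule d1)
    show "0 \<le> J1 0" using v by simp
    show "0 < - t / B * J2 t" if t: "0 \<le> t" "t < b" "J1 t = 0" for t
    proof -
      have t0: "t > 0" using t v by (cases "t = 0") auto
      have "t^2/(A*B) * J2 t = J1 t - J0 t" using r0[of t] by linarith
      hence p: "t^2/(A*B) * J2 t < 0" using pos0[OF t0 t(2)] t(3) by simp
      have q: "t^2/(A*B) > 0" using t0 ABC by simp
      have "J2 t < 0"
      proof (rule ccontr)
        assume "\<not> J2 t < 0"
        hence "t^2/(A*B) * J2 t \<ge> 0" using q by (intro mult_nonneg_nonneg) auto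
        thus False using p by linarith
      qed
      moreover have "t / B > 0" using t0 ABC by simp
      ultimately have "t / B * J2 t < 0" using mult_pos_neg by blast
      thus ?thesis by simp
    qed
  qed (use x in auto)
  define Q where "Q x = (J1 x - x^2*J2 x*(1/B))*J0 x + x^2*(J1 x)^2*(1/A)" for x
  define D where "D x = (-x/B*J2 x - (2*x*J2 x + x^2*(-x/C*J3 x))/B)*J0 x + (J1 x - x^2*J2 x/B)*(-x/A*J1 x) + (2*x*(J1 x)^2 + x^2*(2*J1 x*(-x/B*J2 x)))/A" for x
  have Anz: "A \<noteq> 0" "B \<noteq> 0" "C \<noteq> 0" using ABC by auto
  have dQ: "(Q has_real_derivative D x) (at x)" for x
    unfolding Q_def[abs_def] D_def by (rule dQ_gen[OF d0 d1 d2 Anz])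
  have posQ: "Q x > 0" if x: "0 < x" "x < b" for x
  proof (rule pos_first_zero[of b Q D])
    show "(Q has_real_derivative D t) (at t)" for t by (rule dQ)
    show "0 \<le> Q 0" using v by (simp add: Q_def)
    show "0 < D t" if t: "0 \<le> t" "t < b" "Q t = 0" for t
    proof -
      have t0: "t > 0" using t v by (cases "t = 0") (auto simp: Q_def)
      have "t * D t = (A-1) * J0 t * J1 t"
        unfolding D_def by (rule alg_D) (use ABC r0 r1 t(3) in \<open>auto simp: Q_def\<close>)
      moreover have "(A-1) * J0 t * J1 t > 0" using ABC pos0[OF t0 t(2)] pos1[OF t0 t(2)] by simp
      ultimately have "t * D t > 0" by simp
      thus ?thesis using t0 by (simp add: zero_less_mult_iff)
    qed
  qed (use x in auto)
  define g where "g x = x * J1 x / (A * J0 x)" for x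
  have dg: "(g has_real_derivative Q x / (A * (J0 x)^2)) (at x)" if x: "0 < x" "x < b" for x
  proof -
    have j0: "J0 x \<noteq> 0" using pos0[OF x] by simp
    have e: "Q x / (A * (J0 x)^2) = ((J1 x - x^2*J2 x/B)*J0 x + x^2*(J1 x)^2/A) / (A * (J0 x)^2)"
      by (simp add: Q_def)
    show ?thesis unfolding g_def[abs_def] e
      by (rule dg_gen[OF d0 d1]) (use j0 Anz in auto)
  qed
  have gmono: "g s < g t" if st: "0 < s" "s < t" "t < b" for s t
  proof (rule DERIV_pos_imp_increasing[OF st(2)])
    fix x assume x: "s \<le> x" "x \<le> t"
    hence x': "0 < x" "x < b" using st by auto
    have "Q x / (A * (J0 x)^2) > 0" using posQ[OF x'] pos0[OF x'] ABC by simp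
    thus "\<exists>y. (g has_real_derivative y) (at x) \<and> 0 < y" using dg[OF x'] by blast
  qed
  have dphi: "((\<lambda>x. ln (x/(2*mu) * J0 x)) has_real_derivative (1/x - g x)) (at x)" if x: "0 < x" "x < b" for x
  proof -
    have j0: "J0 x > 0" using pos0[OF x] by simp
    have p: "x/(2*mu) * J0 x > 0" using j0 x mu by simp
    show ?thesis unfolding g_def
      by (rule dphi_gen[OF d0]) (use Anz mu x p in auto)
  qed
  have "strictly_concave_on {0<..<b} (\<lambda>x. ln (x/(2*mu) * J0 x))"
  proof (rule strictly_concave_from_deriv[of 0 b _ "\<lambda>x. 1/x - g x"])
    show "((\<lambda>x. ln (x/(2*mu) * J0 x)) has_real_derivative (1/t - g t)) (at t)" if "0 < t" "t < b" for t
      using dphi that by blast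
    show "1/t - g t < 1/s - g s" if "0 < s" "s < t" "t < b" for s t
    proof -
      have "1/t < 1/s" using that by (simp add: frac_less2)
      thus ?thesis using gmono[OF that] by linarith
    qed
  qed
  moreover have "\<forall>x\<in>{0<..<b}. x/(2*mu) * J0 x > 0" using pos0 mu by simp
  ultimately show ?thesis unfolding strictly_log_concave_on_def hfun b_def by simp
qed

end
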